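(* Let $\Pi$ be a set of primes containing at least two distinct primes, and let $\tau>2$ be a real number. Then the set $W^*_\tau(\Pi)$ contains uncountably many Liouville numbers.
   Context: For a set $\Pi$ of primes, let $Q(\Pi)$ be the set of positive integers divisible by no prime in $\Pi$. When $\Pi$ is finite, $Q(\Pi)$ is the set of positive integers coprime to $\prod_{\pi\in\Pi}\pi$. $W^*_\tau(\Pi)$ is the set of real $x$ satisfying both of the following: \begin{itemize} \item there are infinitely many integers $q\ge1$ with $q\notin Q(\Pi)$ for which some integer $p$ satisfies $|x-p/q|<q^{-\tau}$; \item there are only finitely many $q\in Q(\Pi)$ for which some integer $p$ satisfies $|x-p/q|<q^{-\tau}$. \end{itemize} A Liouville number is an irrational real $x$ such that for every $k>0$ there exist integers $p$ and $q\ge2$ with $0<|x-p/q|<q^{-k}$. *)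

theory Defs
  imports "HOL-Analysis.Analysis"
begin

definition Qset :: "nat set \<Rightarrow> nat set" where
  "Qset P = {q. q \<ge> 1 \<and> (\<forall>p\<in>P. \<not> p dvd q)}"

definition approx_den :: "real \<Rightarrow> real \<Rightarrow> nat \<Rightarrow> bool" where
  "approx_den tau x q \<longleftrightarrow> (\<exists>p::int. \<bar>x - real_of_int p / real q\<bar> < real q powr (- tau))"

definition W_star :: "real \<Rightarrow> nat set \<Rightarrow> real set" where
  "W_star tau P = {x. infinite {q. q \<ge> 1 \<and> q \<notin> Qset P \<and> approx_den tau x q}
                      \<and> finite {q. q \<in> Qset P \<and> approx_den tau x q}}"

definition liouville_number :: "real \<Rightarrow> bool" where
  "liouville_number x \<longleftrightarrow> x \<notin> \<rat> \<and>
     (\<forall>k::real. k > 0 \<longrightarrow> (\<exists>p::int. \<exists>q::int. q \<ge> 2 \<and>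
        0 < \<bar>x - real_of_int p / real_of_int q\<bar> \<and>
        \<bar>x - real_of_int p / real_of_int q\<bar> < real_of_int q powr (- k)))"

end

theory Submission imports Defs begin

lemma uncountable_nat_bool: "uncountable (UNIV :: (nat \<Rightarrow> bool) set)"
proof
  assume "countable (UNIV :: (nat \<Rightarrow> bool) set)"
  then obtain g :: "(nat \<Rightarrow> bool) \<Rightarrow> nat" where g: "inj g" by (metis countableE)
  define f where "f = inv g"
  define D where "D = (\<lambda>n. \<not> f n n)"
  have "f (g D) = D" unfolding f_def using g by simp
  then have "f (g D) (g D) = D (g D)" by simp
  then show False unfolding D_def by simp
qed

fun nseq :: "nat \<Rightarrow> nat \<Rightarrow> nat" where
  "nseq M 0 = 1"
| "nseq M (Suc k) = (M + k + 1) * (nseq M k + 6)"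

declare nseq.simps(2)[simp del]

lemma nseq_Suc_ge: "m \<le> M + k + 1 \<Longrightarrow> nseq M (Suc k) \<ge> m * (nseq M k + 6)"
  unfolding nseq.simps(2) by (rule mult_right_mono) auto

lemma nseq_pos: "nseq M k \<ge> 1"
  by (cases k) (auto simp del: nseq.simps(2) intro: order.trans[OF _ nseq_Suc_ge[of 1]])

lemma nseq_step: "nseq M (Suc k) \<ge> nseq M k + 6 + k"
proof -
  have "nseq M (Suc k) \<ge> (k + 1) * (nseq M k + 6)" by (rule nseq_Suc_ge) simp
  moreover have "(k+1) * (nseq M k + 6) = k * (nseq M k + 6) + (nseq M k + 6)" by simp
  moreover have "k * (nseq M k + 6) \<ge> k" by simp
  ultimately show ?thesis by linarith
qed

lemma nseq_step2: "nseq M (Suc k) \<ge> M * (nseq M k + 6)"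
  by (rule nseq_Suc_ge) simp

lemma nseq_mono: "j \<le> k \<Longrightarrow> nseq M j + (k - j) \<le> nseq M k"
proof (induction k)
  case 0 then show ?case by simp
next
  case (Suc k)
  show ?case
  proof (cases "j \<le> k")
    case True
    then show ?thesis using Suc nseq_step[of M k] by (simp add: Suc_diff_le)
  next
    case False
    then show ?thesis using Suc by (simp add: le_Suc_eq)
  qed
qed

lemma nseq_ge: "k \<le> nseq M k"
  using nseq_mono[of 0 k M] by simp

lemma nseq_strict: "j < k \<Longrightarrow> nseq M j < nseq M k"
  using nseq_mono[of j k M] by simp

lemma nseq_big: "real j \<ge> kap \<Longrightarrow> kap \<ge> 0 \<Longrightarrow> real (nseq M (Suc j)) > kap * real (nseq M j) + 3"
proof -
  assume h: "real j \<ge> kap" "kap \<ge> 0"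
  have "real (nseq M (Suc j)) \<ge> (real j + 1) * (real (nseq M j) + 6)"
  proof -
    have "nseq M (Suc j) \<ge> (j + 1) * (nseq M j + 6)" by (rule nseq_Suc_ge) simp
    then have "real (nseq M (Suc j)) \<ge> real ((j + 1) * (nseq M j + 6))" by linarith
    then show ?thesis by (simp add: algebra_simps)
  qed
  moreover have "(real j + 1) * (real (nseq M j) + 6) \<ge> (kap + 1) * (real (nseq M j) + 6)"
    using h by (intro mult_right_mono) auto
  moreover have "(kap + 1) * (real (nseq M j) + 6) > kap * real (nseq M j) + 3"
    using h nseq_pos[of M j] by (simp add: algebra_simps)
  ultimately show ?thesis by linarith
qed

locale Lc =
  fixes p M :: nat
  assumes pp: "prime p"
begin

lemma p2: "p \<ge> 2" using pp prime_ge_2_nat by blast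

definition dig :: "bool \<Rightarrow> nat" where "dig b = (if b then p+1 else 1)"
definition trm :: "(nat \<Rightarrow> bool) \<Rightarrow> nat \<Rightarrow> real" where
  "trm d j = real (dig (d j)) / real p ^ nseq M j"
definition xv :: "(nat \<Rightarrow> bool) \<Rightarrow> real" where "xv d = suminf (trm d)"
definition T :: "(nat \<Rightarrow> bool) \<Rightarrow> nat \<Rightarrow> real" where "T d k = (\<Sum>i. trm d (i + Suc k))"
definition r :: "(nat \<Rightarrow> bool) \<Rightarrow> nat \<Rightarrow> real" where "r d k = (\<Sum>j<Suc k. trm d j)"

fun Aq :: "(nat \<Rightarrow> bool) \<Rightarrow> nat \<Rightarrow> nat" where
  "Aq d 0 = dig (d 0)"
| "Aq d (Suc k) = Aq d k * p ^ (nseq M (Suc k) - nseq M k) + dig (d (Suc k))"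

lemma dig_ge: "dig b \<ge> 1" unfolding dig_def by auto
lemma dig_le: "dig b \<le> 2 * p" unfolding dig_def using p2 by auto
lemma dig_mod: "dig b mod p = 1"
proof -
  have "(p + 1) mod p = 1 mod p" by (rule mod_add_self1)
  moreover have "1 mod p = 1" using p2 by simp
  ultimately have "(p + 1) mod p = 1" by (rule trans)
  then show ?thesis unfolding dig_def using \<open>1 mod p = 1\<close> by (cases b) (simp_all only: if_True if_False)
qed

lemma trm_pos: "0 < trm d j"
  unfolding trm_def using dig_ge[of "d j"] p2 by auto

lemma trm_le: "trm d j \<le> 2 * p / real p ^ nseq M j"
  unfolding trm_def using dig_le[of "d j"] p2 by (intro divide_right_mono) auto

lemma pow_ge2: "(2::real) ^ m \<le> real p ^ m"
  using p2 by (intro power_mono) auto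

lemma trm_le_geo: "trm d j \<le> 2 * p * (1/2) ^ j"
proof -
  have "(2::real) ^ j \<le> 2 ^ nseq M j" using nseq_ge[of j M] by (intro power_increasing) auto
  also have "\<dots> \<le> real p ^ nseq M j" by (rule pow_ge2)
  finally have h: "(2::real) ^ j \<le> real p ^ nseq M j" .
  have "trm d j \<le> 2 * p / real p ^ nseq M j" by (rule trm_le)
  also have "\<dots> \<le> 2 * p / 2 ^ j" using h p2 by (intro divide_left_mono) auto
  also have "\<dots> = 2 * p * (1/2) ^ j" by (simp add: power_divide)
  finally show ?thesis .
qed

lemma summable_trm: "summable (trm d)"
proof (rule summable_comparison_test[of _ "\<lambda>j. 2 * real p * (1/2) ^ j"])
  show "\<exists>N. \<forall>n\<ge>N. norm (trm d n) \<le> 2 * real p * (1 / 2) ^ n"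
    using trm_le_geo trm_pos by (auto intro!: exI[of _ 0] simp: less_imp_le)
  show "summable (\<lambda>j. 2 * real p * (1 / 2) ^ j)"
    by (intro summable_mult summable_geometric) auto
qed

lemma summable_shift: "summable (\<lambda>i. trm d (i + k))"
  using summable_trm summable_ignore_initial_segment by blast

lemma x_split: "xv d = T d k + r d k"
  unfolding xv_def T_def r_def using suminf_split_initial_segment[OF summable_trm, of d "Suc k"] by simp

lemma T_pos: "0 < T d k"
  unfolding T_def using summable_shift[of d "Suc k"] trm_pos by (intro suminf_pos) auto

lemma T_le: "T d k \<le> 4 * p / real p ^ nseq M (Suc k)"
proof -
  define c where "c = 2 * p / real p ^ nseq M (Suc k)"
  have b: "trm d (i + Suc k) \<le> c * (1/2) ^ i" for i
  proof -
    have "nseq M (Suc k) + i \<le> nseq M (i + Suc k)" using nseq_mono[of "Suc k" "i + Suc k" M] by simp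
    then have "real p ^ (nseq M (Suc k) + i) \<le> real p ^ nseq M (i + Suc k)"
      using p2 by (intro power_increasing) auto
    moreover have "real p ^ nseq M (Suc k) * 2 ^ i \<le> real p ^ (nseq M (Suc k) + i)"
      using pow_ge2[of i] p2 by (simp add: power_add mult_left_mono)
    ultimately have h: "real p ^ nseq M (Suc k) * 2 ^ i \<le> real p ^ nseq M (i + Suc k)" by linarith
    have "trm d (i + Suc k) \<le> 2 * p / real p ^ nseq M (i + Suc k)" by (rule trm_le)
    also have "\<dots> \<le> 2 * p / (real p ^ nseq M (Suc k) * 2 ^ i)"
      using h p2 by (intro divide_left_mono) auto
    also have "\<dots> = c * (1/2) ^ i" unfolding c_def by (simp add: power_divide)
    finally show ?thesis .
  qed
  have sg: "summable (\<lambda>i. c * (1/2::real) ^ i)" by (intro summable_mult summable_geometric) auto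
  have "T d k \<le> (\<Sum>i. c * (1/2) ^ i)" unfolding T_def
    by (rule suminf_le[OF b summable_shift sg])
  also have "\<dots> = c * 2" by (simp add: suminf_mult suminf_geometric)
  also have "\<dots> = 4 * p / real p ^ nseq M (Suc k)" unfolding c_def by simp
  finally show ?thesis .
qed

lemma Aq_r: "real (Aq d k) / real p ^ nseq M k = r d k"
proof (induction k)
  case 0 then show ?case by (simp add: r_def trm_def)
next
  case (Suc k)
  have le: "nseq M k \<le> nseq M (Suc k)" using nseq_strict[of k "Suc k" M] by simp
  have pk: "real p ^ nseq M (Suc k) = real p ^ (nseq M (Suc k) - nseq M k) * real p ^ nseq M k"
    using le by (simp flip: power_add)
  have "r d (Suc k) = r d k + trm d (Suc k)" unfolding r_def by simp
  also have "\<dots> = real (Aq d k) / real p ^ nseq M k + trm d (Suc k)" using Suc by simp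
  also have "\<dots> = real (Aq d (Suc k)) / real p ^ nseq M (Suc k)"
    using p2 unfolding trm_def pk by (simp add: field_simps)
  finally show ?case by simp
qed

lemma Aq_mod: "Aq d k mod p = 1"
proof (cases k)
  case 0 then show ?thesis using dig_mod by simp
next
  case (Suc k')
  have "nseq M k' < nseq M (Suc k')" by (rule nseq_strict) simp
  then have "p dvd p ^ (nseq M (Suc k') - nseq M k')" by simp
  then have "p dvd Aq d k' * p ^ (nseq M (Suc k') - nseq M k')" by simp
  then show ?thesis using Suc dig_mod by (simp add: mod_add_left_eq[symmetric])
qed

lemma Aq_ndvd: "\<not> p dvd Aq d k"
  using Aq_mod[of d k] p2 by (auto simp: dvd_eq_mod_eq_0)


lemma sep:
  fixes c A :: int and e N :: nat
  assumes "e > 0" "N > 0" "real_of_int c / real e \<noteq> real_of_int A / real N"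
  shows "1 / (real e * real N) \<le> \<bar>real_of_int c / real e - real_of_int A / real N\<bar>"
proof -
  define z where "z = c * int N - A * int e"
  have "real_of_int c / real e - real_of_int A / real N = real_of_int z / (real e * real N)"
    unfolding z_def using assms by (simp add: field_simps)
  moreover have "z \<noteq> 0"
  proof
    assume "z = 0"
    then have "real_of_int c * real N = real_of_int A * real e" unfolding z_def
      by (metis eq_iff_diff_eq_0 of_int_eq_iff of_int_mult of_int_of_nat_eq)
    then show False using assms by (simp add: field_simps)
  qed
  then have "1 \<le> \<bar>real_of_int z\<bar>" by linarith
  ultimately show ?thesis using assms by (simp add: abs_div divide_right_mono)
qed

definition Nn :: "nat \<Rightarrow> nat" where "Nn k = p ^ nseq M k"

lemma Nn_pos: "Nn k > 0" unfolding Nn_def using p2 by simp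

lemma Nn_ge: "Nn k \<ge> 2 ^ k"
proof -
  have "2 ^ k \<le> (2::nat) ^ nseq M k" using nseq_ge[of k M] by (intro power_increasing) auto
  also have "\<dots> \<le> Nn k" unfolding Nn_def using p2 by (intro power_mono) auto
  finally show ?thesis .
qed

lemma Nn_gt: "Nn k > k" using Nn_ge[of k] less_exp[of k] by linarith

lemma p_dvd_Nn: "p dvd Nn k" unfolding Nn_def using nseq_pos[of M k] by (simp add: dvd_power)

lemma Nn_strict: "j < k \<Longrightarrow> Nn j < Nn k"
  unfolding Nn_def using p2 nseq_strict[of j k M] by (intro power_strict_increasing) auto

lemma r_Nn: "r d k = real (Aq d k) / real (Nn k)"
  using Aq_r[of d k] unfolding Nn_def by simp

lemma real_Nn_powr: "real (Nn k) powr a = real p powr (real (nseq M k) * a)"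
  unfolding Nn_def using p2 by (simp add: powr_powr powr_realpow[symmetric])

lemma T_small:
  assumes "kap \<ge> 0" "real j \<ge> kap"
  shows "T d j < real (Nn j) powr (- kap)"
proof -
  have pp1: "real p > 1" using p2 by simp
  have "T d j \<le> 4 * p / real p ^ nseq M (Suc j)" by (rule T_le)
  also have "\<dots> \<le> real p ^ 3 / real p ^ nseq M (Suc j)"
  proof -
    have "(4::real) \<le> real p * real p" using p2 mult_mono[of 2 "real p" 2 "real p"] by simp
    then have "(4::real) * p \<le> real p * real p * real p" using pp1 by (intro mult_right_mono) auto
    then have "(4::real) * p \<le> real p ^ 3" by (simp only: power3_eq_cube)
    then show ?thesis using pp1 by (intro divide_right_mono) auto
  qed
  also have "\<dots> = real p powr (3 - real (nseq M (Suc j)))"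
  proof -
    have "real p ^ 3 = real p powr 3" using pp1 powr_realpow[of "real p" 3] by simp
    moreover have "real p ^ nseq M (Suc j) = real p powr real (nseq M (Suc j))" using pp1 powr_realpow by simp
    ultimately show ?thesis by (simp only: powr_diff)
  qed
  also have "\<dots> < real p powr (real (nseq M j) * (- kap))"
  proof (rule powr_less_mono[OF _ pp1])
    show "3 - real (nseq M (Suc j)) < real (nseq M j) * - kap"
      using nseq_big[OF assms(2) assms(1), of M] by (simp add: mult.commute)
  qed
  also have "\<dots> = real (Nn j) powr (- kap)" by (simp only: real_Nn_powr)
  finally show ?thesis .
qed

lemma x_minus_r: "xv d - r d k = T d k" using x_split[of d k] by simp

lemma irrational: "xv d \<notin> \<rat>"
proof
  assume "xv d \<in> \<rat>"
  then obtain a :: int and b :: nat where ab: "b > 0" "xv d = real_of_int a / real b"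
    by (metis Rats_cases' of_int_of_nat_eq zero_less_imp_eq_int)
  define j where "j = max 2 b"
  have ne: "real_of_int a / real b \<noteq> real_of_int (int (Aq d j)) / real (Nn j)"
    using T_pos[of d j] x_minus_r[of d j] r_Nn[of d j] ab by auto
  have "1 / (real b * real (Nn j)) \<le> \<bar>real_of_int a / real b - real_of_int (int (Aq d j)) / real (Nn j)\<bar>"
    by (rule sep[OF ab(1) Nn_pos ne])
  also have "\<dots> = T d j" using T_pos[of d j] x_minus_r[of d j] r_Nn[of d j] ab by simp
  also have "\<dots> < real (Nn j) powr (- 2)" by (rule T_small) (auto simp: j_def)
  also have "\<dots> = 1 / (real (Nn j) * real (Nn j))"
    using Nn_pos[of j] by (simp add: powr_minus powr_realpow[symmetric] power2_eq_square divide_inverse)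
  finally have "1 / (real b * real (Nn j)) < 1 / (real (Nn j) * real (Nn j))" .
  then have "real (Nn j) * real (Nn j) < real b * real (Nn j)" using Nn_pos[of j] ab(1)
    by (simp add: field_simps)
  then have "real (Nn j) < real b" using Nn_pos[of j] by simp
  moreover have "b \<le> Nn j" using Nn_gt[of j] unfolding j_def by linarith
  ultimately show False by simp
qed

lemma liouville: "liouville_number (xv d)"
  unfolding liouville_number_def
proof (intro conjI allI impI)
  show "xv d \<notin> \<rat>" by (rule irrational)
  fix k :: real assume k: "k > 0"
  obtain j :: nat where j: "real j \<ge> k" using real_arch_simple by blast
  have "j \<ge> 1" using j k by (cases j) auto
  have q2: "int (Nn j) \<ge> 2" using Nn_gt[of j] \<open>j \<ge> 1\<close> by linarith
  have e: "xv d - real_of_int (int (Aq d j)) / real_of_int (int (Nn j)) = T d j"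
    using x_minus_r[of d j] r_Nn[of d j] by simp
  show "\<exists>pa qa. 2 \<le> qa \<and> 0 < \<bar>xv d - real_of_int pa / real_of_int qa\<bar> \<and>
          \<bar>xv d - real_of_int pa / real_of_int qa\<bar> < real_of_int qa powr - k"
    using q2 e T_pos[of d j] T_small[of k j d] k j by (intro exI[of _ "int (Aq d j)"] exI[of _ "int (Nn j)"]) auto
qed

lemma ne_rk:
  assumes "s > 0" "\<not> p dvd s"
  shows "real_of_int b / real s \<noteq> real_of_int (int (Aq d k)) / real (Nn k)"
proof
  assume "real_of_int b / real s = real_of_int (int (Aq d k)) / real (Nn k)"
  then have "real_of_int b * real (Nn k) = real (Aq d k) * real s"
    using assms Nn_pos[of k] by (simp add: field_simps)
  then have "real_of_int (b * int (Nn k)) = real_of_int (int (Aq d k) * int s)" by simp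
  then have e: "b * int (Nn k) = int (Aq d k) * int s" by (simp only: of_int_eq_iff)
  have "int p dvd b * int (Nn k)" using p_dvd_Nn[of k] by simp
  then have "int p dvd int (Aq d k) * int s" using e by simp
  moreover have "prime (int p)" using pp by simp
  ultimately have "int p dvd int (Aq d k) \<or> int p dvd int s" using prime_dvd_mult_iff by blast
  then show False using assms(2) Aq_ndvd[of d k] by simp
qed

lemma no_good_approx:
  assumes sig: "sig > 1" and Mc: "real M * (1 - 1/sig) \<ge> 1"
    and s: "s \<ge> 2 * p" "\<not> p dvd s"
    and ap: "\<bar>xv d - real_of_int b / real s\<bar> < real s powr (-(sig + 1))"
  shows False
proof -
  have s1: "real s \<ge> 1" using s p2 by simp
  define S where "S = real s powr sig"
  have "real s powr 1 \<le> real s powr sig" using s1 sig by (intro powr_mono) auto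
  then have Sge: "S \<ge> real s" unfolding S_def using s1 by simp
  have ex: "\<exists>m. S < 2 * real (Nn m)"
  proof -
    define m where "m = nat \<lceil>S\<rceil>"
    have "S \<le> real m" unfolding m_def by linarith
    moreover have "real m < real (Nn m)" using Nn_gt[of m] by simp
    ultimately show ?thesis by (intro exI[of _ m]) linarith
  qed
  define m0 where "m0 = (LEAST m. S < 2 * real (Nn m))"
  have m0: "S < 2 * real (Nn m0)" unfolding m0_def using ex by (rule LeastI_ex)
  have "\<not> S < 2 * real (Nn 0)" using Sge s unfolding Nn_def by simp
  then have "m0 \<noteq> 0" using m0 by metis
  then obtain k where k: "m0 = Suc k" by (cases m0) auto
  have Sk: "2 * real (Nn k) \<le> S"
    using not_less_Least[of k "\<lambda>m. S < 2 * real (Nn m)"] k unfolding m0_def[symmetric] by simp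
  have SSk: "S < 2 * real (Nn (Suc k))" using m0 k by simp
  define N where "N = real (Nn k)"
  define N' where "N' = real (Nn (Suc k))"
  have Npos: "N > 0" "N' > 0" unfolding N_def N'_def using Nn_pos by auto
  have spos: "real s > 0" using s1 by simp
  have sepk: "1 / (real s * N) \<le> \<bar>real_of_int b / real s - real (Aq d k) / N\<bar>"
    using sep[OF _ Nn_pos ne_rk[of s b d k]] s s1 unfolding N_def by simp
  also have "\<dots> \<le> \<bar>xv d - real_of_int b / real s\<bar> + \<bar>xv d - real (Aq d k) / N\<bar>" by linarith
  also have "\<bar>xv d - real (Aq d k) / N\<bar> = T d k"
    using x_minus_r[of d k] r_Nn[of d k] T_pos[of d k] unfolding N_def by simp
  finally have main: "1 / (real s * N) < real s powr (-(sig + 1)) + T d k" using ap by linarith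
  have "real s powr (sig + 1) = S * real s" unfolding S_def using spos by (simp add: powr_add)
  then have "real s powr (-(sig + 1)) = 1 / (S * real s)" by (metis powr_minus inverse_eq_divide)
  also have "\<dots> \<le> 1 / (2 * N * real s)"
    using Sk Npos spos unfolding N_def by (intro divide_left_mono mult_right_mono) auto
  finally have t1: "real s powr (-(sig + 1)) \<le> 1 / (2 * real s * N)" by (simp add: mult_ac)
  define a where "a = 1 / sig"
  have a01: "0 < a" "a < 1" unfolding a_def using sig by auto
  have "(real s powr sig) powr a = real s" unfolding a_def using sig spos by (simp add: powr_powr)
  then have sS: "real s = S powr a" unfolding S_def by simp
  have "S powr a < (2 * N') powr a"
    using SSk a01 Sge spos unfolding N'_def by (intro powr_less_mono2) auto
  also have "\<dots> = 2 powr a * N' powr a" using Npos by (simp add: powr_mult)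
  also have "\<dots> \<le> 2 * N' powr a"
  proof -
    have "(2::real) powr a \<le> 2 powr 1" using a01 by (intro powr_mono) auto
    then show ?thesis by (intro mult_right_mono) auto
  qed
  finally have sN: "real s < 2 * N' powr a" using sS by simp
  have expo: "real (nseq M k) + 6 \<le> real (nseq M (Suc k)) * (1 - a)"
  proof -
    have "real (nseq M (Suc k)) \<ge> real M * (real (nseq M k) + 6)"
      using nseq_step2[of M k] by (metis of_nat_add of_nat_le_iff of_nat_mult of_nat_numeral)
    then have "real (nseq M (Suc k)) * (1 - a) \<ge> real M * (real (nseq M k) + 6) * (1 - a)"
      using a01 by (intro mult_right_mono) auto
    moreover have "real M * (real (nseq M k) + 6) * (1 - a) = (real M * (1 - a)) * (real (nseq M k) + 6)"
      by (simp add: mult_ac)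
    moreover have "(real M * (1 - a)) * (real (nseq M k) + 6) \<ge> 1 * (real (nseq M k) + 6)"
      using Mc unfolding a_def by (intro mult_right_mono) auto
    ultimately show ?thesis by (metis mult_1 order_trans)
  qed
  have "N' powr (1 - a) = real p powr (real (nseq M (Suc k)) * (1 - a))"
    unfolding N'_def by (rule real_Nn_powr)
  also have "\<dots> \<ge> real p powr (real (nseq M k) + 6)" using expo p2 by (intro powr_mono) auto
  finally have "N' powr (1 - a) \<ge> real p powr (real (nseq M k) + 6)" .
  moreover have "real p powr (real (nseq M k) + 6) = N * real p ^ 6"
  proof -
    have "real p powr (real (nseq M k) + 6) = real p powr real (nseq M k) * real p powr real (6::nat)"
      by (simp add: powr_add)
    also have "\<dots> = N * real p ^ 6" unfolding N_def Nn_def using p2 by (simp only: powr_realpow) simp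
    finally show ?thesis .
  qed
  moreover have "16 * real p \<le> real p ^ 6"
  proof -
    have "(2::real) ^ 5 \<le> real p ^ 5" by (rule pow_ge2)
    then have "16 * real p \<le> real p ^ 5 * real p" using p2 by (intro mult_right_mono) auto
    then show ?thesis by (simp add: power_Suc2[symmetric] del: power_Suc)
  qed
  ultimately have big: "16 * real p * N \<le> N' powr (1 - a)" using Npos
    by (metis (no_types, lifting) dual_order.trans mult.commute mult_left_mono less_imp_le)
  have NN: "N' = N' powr a * N' powr (1 - a)" using Npos by (simp flip: powr_add)
  have "8 * real p * real s * N < 8 * real p * (2 * N' powr a) * N"
    using sN p2 Npos by (intro mult_strict_right_mono mult_strict_left_mono) auto
  also have "\<dots> = N' powr a * (16 * real p * N)" by (simp add: mult_ac)
  also have "\<dots> \<le> N' powr a * N' powr (1 - a)" using big by (intro mult_left_mono) auto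
  also have "\<dots> = N'" using NN by simp
  finally have c2: "8 * real p * real s * N < N'" .
  have "T d k \<le> 4 * real p / N'" using T_le[of d k] unfolding N'_def Nn_def by simp
  also have "\<dots> < 1 / (2 * real s * N)" using c2 Npos spos by (simp add: field_simps)
  finally have t2: "T d k < 1 / (2 * real s * N)" .
  have "1 / (real s * N) = 1 / (2 * real s * N) + 1 / (2 * real s * N)" by (simp add: field_simps)
  moreover have "real s powr (-(sig + 1)) + T d k < 1 / (2 * real s * N) + 1 / (2 * real s * N)"
    using t1 t2 by (rule add_le_less_mono)
  ultimately show False using main by (metis less_asym)
qed

lemma inj_xv: "inj xv"
proof
  fix d d' assume eq: "xv d = xv d'"
  show "d = d'"
  proof (rule ccontr)
    assume "d \<noteq> d'"
    then have "\<exists>k. d k \<noteq> d' k" by auto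
    define k where "k = (LEAST k. d k \<noteq> d' k)"
    have dk: "d k \<noteq> d' k" unfolding k_def using \<open>\<exists>k. d k \<noteq> d' k\<close> by (rule LeastI_ex)
    have less: "j < k \<Longrightarrow> d j = d' j" for j unfolding k_def using not_less_Least by blast
    have "(\<Sum>j<k. trm d j) = (\<Sum>j<k. trm d' j)" using less unfolding trm_def by simp
    then have "r d k - r d' k = trm d k - trm d' k" unfolding r_def by simp
    moreover have "\<bar>trm d k - trm d' k\<bar> = real p / real p ^ nseq M k"
      using dk unfolding trm_def dig_def by (cases "d k") (auto simp: diff_divide_distrib[symmetric])
    moreover have "\<bar>T d k - T d' k\<bar> < 4 * real p / real p ^ nseq M (Suc k)"
      using T_pos[of d k] T_pos[of d' k] T_le[of d k] T_le[of d' k] by linarith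
    moreover have "4 * real p / real p ^ nseq M (Suc k) \<le> real p / real p ^ nseq M k"
    proof -
      have "nseq M k + 2 \<le> nseq M (Suc k)" using nseq_step[of M k] by simp
      then have "real p ^ (nseq M k + 2) \<le> real p ^ nseq M (Suc k)" using p2 by (intro power_increasing) auto
      moreover have "4 * real p ^ nseq M k \<le> real p ^ (nseq M k + 2)"
        using pow_ge2[of 2] p2 by (simp add: power_add mult.commute mult_left_mono power2_eq_square)
      ultimately have "4 * real p ^ nseq M k \<le> real p ^ nseq M (Suc k)" by linarith
      then show ?thesis using p2 by (simp add: field_simps)
    qed
    moreover have "T d k + r d k = T d' k + r d' k" using eq x_split[of d k] x_split[of d' k] by simp
    ultimately show False by linarith
  qed
qed
end


theorem theorem2:
  fixes P :: "nat set" and tau :: real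
  assumes "\<forall>p\<in>P. prime p"
    and "\<exists>p1\<in>P. \<exists>p2\<in>P. p1 \<noteq> p2"
    and "tau > 2"
  shows "uncountable {x \<in> W_star tau P. liouville_number x}"
proof -
  obtain p where pP: "p \<in> P" using assms(2) by blast
  have prp: "prime p" using assms(1) pP by blast
  define sig where "sig = tau - 1"
  have sig: "sig > 1" using assms(3) unfolding sig_def by simp
  define M where "M = nat \<lceil>sig / (sig - 1)\<rceil>"
  have "real M \<ge> sig / (sig - 1)" unfolding M_def by linarith
  then have "real M * (sig - 1) \<ge> sig" using sig by (simp add: field_simps)
  then have Mc: "real M * (1 - 1 / sig) \<ge> 1" using sig by (simp add: field_simps)
  interpret Lc p M by standard (rule prp)
  have sub: "range xv \<subseteq> {x \<in> W_star tau P. liouville_number x}"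
  proof safe
    fix d
    show "liouville_number (xv d)" by (rule liouville)
    have inf: "infinite {q. q \<ge> 1 \<and> q \<notin> Qset P \<and> approx_den tau (xv d) q}"
    proof -
      have "Nn ` {j. real j \<ge> tau} \<subseteq> {q. q \<ge> 1 \<and> q \<notin> Qset P \<and> approx_den tau (xv d) q}"
      proof safe
        fix j assume j: "real j \<ge> tau"
        show "1 \<le> Nn j" using Nn_pos[of j] by simp
        show "Nn j \<in> Qset P \<Longrightarrow> False" using pP p_dvd_Nn[of j] unfolding Qset_def by blast
        have "\<bar>xv d - real_of_int (int (Aq d j)) / real (Nn j)\<bar> = T d j"
          using x_minus_r[of d j] r_Nn[of d j] T_pos[of d j] by simp
        also have "\<dots> < real (Nn j) powr (- tau)" using j assms(3) by (intro T_small) auto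
        finally show "approx_den tau (xv d) (Nn j)" unfolding approx_den_def by blast
      qed
      moreover have "infinite (Nn ` {j. real j \<ge> tau})"
      proof
        assume "finite (Nn ` {j. real j \<ge> tau})"
        moreover have "inj_on Nn {j. real j \<ge> tau}"
          by (rule strict_mono_imp_inj_on) (auto simp: strict_mono_def Nn_strict)
        ultimately have "finite {j. real j \<ge> tau}" using finite_imageD by blast
        moreover have "{nat \<lceil>tau\<rceil>..} \<subseteq> {j. real j \<ge> tau}" by auto
        ultimately show False using infinite_Ici finite_subset by blast
      qed
      ultimately show ?thesis using infinite_super by blast
    qed
    have fin: "finite {q. q \<in> Qset P \<and> approx_den tau (xv d) q}"
    proof (rule finite_subset[of _ "{..<2*p}"])
      show "{q. q \<in> Qset P \<and> approx_den tau (xv d) q} \<subseteq> {..<2 * p}"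
      proof safe
        fix q assume q: "q \<in> Qset P" "approx_den tau (xv d) q"
        show "q < 2 * p"
        proof (rule ccontr)
          assume "\<not> q < 2 * p"
          then have q2: "q \<ge> 2 * p" by simp
          have nd: "\<not> p dvd q" using q(1) pP unfolding Qset_def by blast
          obtain b :: int where b: "\<bar>xv d - real_of_int b / real q\<bar> < real q powr (- tau)"
            using q(2) unfolding approx_den_def by blast
          have "- tau = -(sig + 1)" unfolding sig_def by simp
          then show False using no_good_approx[OF sig Mc q2 nd, of d b] b by simp
        qed
      qed
    qed simp
    show "xv d \<in> W_star tau P" unfolding W_star_def using inf fin by blast
  qed
  show ?thesis
  proof
    assume "countable {x \<in> W_star tau P. liouville_number x}"
    then have "countable (range xv)" using sub countable_subset by blast
    then have "countable (UNIV :: (nat \<Rightarrow> bool) set)"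
      using countable_image_inj_on inj_xv by blast
    then show False using uncountable_nat_bool by blast
  qed
qed

end
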